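(* Let $k\ge2$, $IS\in\{\Box,\blacksquare\}^k$, and let $\tau$ be a correct compositional translation from $\mathrm{SYNCSIMPLE}$ into $\mathrm{LOCKSIMPLE}_{k,IS}$. Then there is some $i$ such that $\tau(!)$ has a blocking subsequence of the form $RP_i$ or $P_iRP_i$, where $R$ contains neither $P_i$ nor $T_i$. The same holds for $\tau(?)$.
   Context: $\mathrm{SYNCSIMPLE}$: subprocesses $\mathcal{U} ::= \checkmark \mid 0 \mid\, !\mathcal{U} \mid\, ?\mathcal{U}$; processes are finite parallel compositions ($\mid$ associative, commutative, $0$ a unit). Reduction: $!\mathcal{U}_1\mid ?\mathcal{U}_2\mid \mathcal{P}\to \mathcal{U}_1\mid\mathcal{U}_2\mid\mathcal{P}$. Successful: of form $\checkmark\mid\mathcal{P}$; may-convergent: reduces to a successful process; must-convergent: every reachable process is may-convergent. $\mathrm{LOCKSIMPLE}_{k,IS}$ ($IS\in\{\Box,\blacksquare\}^k$, $\Box$ empty, $\blacksquare$ full): subprocesses are words over $\{P_1,T_1,\dots,P_k,T_k\}$ followed by $0$ or $\checkmark$; states $(\mathcal{P},C)$ reduce by $(P_i\mathcal{U}\mid\mathcal{P},C)\to(\mathcal{U}\mid\mathcal{P},C[C_i:=\blacksquare])$ only if $C_i=\Box$, and $(T_i\mathcal{U}\mid\mathcal{P},C)\to(\mathcal{U}\mid\mathcal{P},C[C_i:=\Box])$ always. Success = process contains $\checkmark$; a process $\mathcal{P}$ is may/must-convergent iff the state $(\mathcal{P},IS)$ is. A compositional translation $\tau$ is given by words $\tau(!),\tau(?)$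 with $\tau(0)=0$, $\tau(\checkmark)=\checkmark$, $\tau(!\mathcal{U})=\tau(!)\tau(\mathcal{U})$, $\tau(?\mathcal{U})=\tau(?)\tau(\mathcal{U})$, $\tau$ commuting with $\mid$; correct = preserves and reflects may- and must-convergence. Blocking prefix of a word $S$: a prefix of $S$ of the form $R_1P_iR_2P_i$ with $R_2$ containing no $P_i,T_i$, or of the form $R_1P_i$ with $R_1$ containing no $P_i,T_i$, such that executing $S$ alone as a single subprocess starting with store $IS$ gets stuck exactly before this last $P_i$. The suffix $P_iR_2P_i$, resp. $R_1P_i$, is then called a blocking subsequence of $S$. *)

theory Defs
  imports Main "HOL-Library.Multiset"
begin

datatype ssub = SCheck | SZero | SSend ssub | SRecv ssub

type_synonym sproc = "ssub multiset"

inductive sred :: "sproc \<Rightarrow> sproc \<Rightarrow> bool" where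
  "sred ({#SSend u1, SRecv u2#} + P) ({#u1, u2#} + P)"

definition s_successful :: "sproc \<Rightarrow> bool" where
  "s_successful P \<longleftrightarrow> SCheck \<in># P"

definition s_may :: "sproc \<Rightarrow> bool" where
  "s_may P \<longleftrightarrow> (\<exists>Q. sred\<^sup>*\<^sup>* P Q \<and> s_successful Q)"

definition s_must :: "sproc \<Rightarrow> bool" where
  "s_must P \<longleftrightarrow> (\<forall>Q. sred\<^sup>*\<^sup>* P Q \<longrightarrow> s_may Q)"

text \<open>Lock indices are 0-based (0..k-1). A store is a bool list of length k;
  True = full, False = empty.\<close>

datatype lact = LP nat | LT nat

fun lidx :: "lact \<Rightarrow> nat" where
  "lidx (LP i) = i" | "lidx (LT i) = i"

type_synonym lword = "lact list"
text \<open>A subprocess: a word followed by 0 (False) or checkmark (True).\<close>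
type_synonym lsub = "lword \<times> bool"
type_synonym lproc = "lsub multiset"
type_synonym store = "bool list"

inductive lred :: "lproc \<times> store \<Rightarrow> lproc \<times> store \<Rightarrow> bool" where
  lred_P: "\<not> C ! i \<Longrightarrow> lred ({#(LP i # u, e)#} + P, C) ({#(u, e)#} + P, C[i := True])"
| lred_T: "lred ({#(LT i # u, e)#} + P, C) ({#(u, e)#} + P, C[i := False])"

definition l_successful :: "lproc \<times> store \<Rightarrow> bool" where
  "l_successful S \<longleftrightarrow> ([], True) \<in># fst S"

definition l_may :: "lproc \<times> store \<Rightarrow> bool" where
  "l_may S \<longleftrightarrow> (\<exists>S'. lred\<^sup>*\<^sup>* S S' \<and> l_successful S')"

definition l_must :: "lproc \<times> store \<Rightarrow> bool" where
  "l_must S \<longleftrightarrow> (\<forall>S'. lred\<^sup>*\<^sup>* S S' \<longrightarrow> l_may S')"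

text \<open>The translation given by the words ws = tau(!) and wr = tau(?).\<close>
fun tr_sub :: "lword \<Rightarrow> lword \<Rightarrow> ssub \<Rightarrow> lsub" where
  "tr_sub ws wr SCheck = ([], True)"
| "tr_sub ws wr SZero = ([], False)"
| "tr_sub ws wr (SSend u) = (ws @ fst (tr_sub ws wr u), snd (tr_sub ws wr u))"
| "tr_sub ws wr (SRecv u) = (wr @ fst (tr_sub ws wr u), snd (tr_sub ws wr u))"

definition tr_proc :: "lword \<Rightarrow> lword \<Rightarrow> sproc \<Rightarrow> lproc" where
  "tr_proc ws wr P = image_mset (tr_sub ws wr) P"

definition correct_translation :: "nat \<Rightarrow> store \<Rightarrow> lword \<Rightarrow> lword \<Rightarrow> bool" where
  "correct_translation k IS ws wr \<longleftrightarrow>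
     (\<forall>a \<in> set ws \<union> set wr. lidx a < k) \<and>
     (\<forall>P. (s_may P \<longleftrightarrow> l_may (tr_proc ws wr P, IS)) \<and>
          (s_must P \<longleftrightarrow> l_must (tr_proc ws wr P, IS)))"

text \<open>Run a word as a single subprocess: Some final store if it runs to the end,
  None if it gets stuck.\<close>
fun exec_word :: "store \<Rightarrow> lword \<Rightarrow> store option" where
  "exec_word C [] = Some C"
| "exec_word C (LP i # w) = (if C ! i then None else exec_word (C[i := True]) w)"
| "exec_word C (LT i # w) = exec_word (C[i := False]) w"

definition stuck_before :: "store \<Rightarrow> lword \<Rightarrow> nat \<Rightarrow> nat \<Rightarrow> bool" where
  "stuck_before IS S n i \<longleftrightarrow> n < length S \<and> S ! n = LP i \<and>
     (\<exists>C. exec_word IS (take n S) = Some C \<and> C ! i)"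

definition no_lock :: "nat \<Rightarrow> lword \<Rightarrow> bool" where
  "no_lock i R \<longleftrightarrow> LP i \<notin> set R \<and> LT i \<notin> set R"

definition has_blocking_subseq :: "store \<Rightarrow> lword \<Rightarrow> nat \<Rightarrow> bool" where
  "has_blocking_subseq IS S i \<longleftrightarrow>
     (\<exists>R1 R2 rest. S = R1 @ [LP i] @ R2 @ [LP i] @ rest \<and> no_lock i R2 \<and>
        stuck_before IS S (length R1 + 1 + length R2) i)
   \<or> (\<exists>R1 rest. S = R1 @ [LP i] @ rest \<and> no_lock i R1 \<and>
        stuck_before IS S (length R1) i)"

end

theory Submission
  imports Defs
begin

lemma exec_len: "exec_word C w = Some C' \<Longrightarrow> length C' = length C"
proof (induction w arbitrary: C)
  case Nil then show ?case by simp
next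
  case (Cons a w) then show ?case by (cases a) (auto split: if_splits)
qed

lemma exec_nolock: "exec_word C w = Some C' \<Longrightarrow> no_lock i w \<Longrightarrow> C' ! i = C ! i"
proof (induction w arbitrary: C)
  case Nil then show ?case by simp
next
  case (Cons a w) then show ?case
    by (cases a) (fastforce simp: no_lock_def split: if_splits)+
qed

lemma exec_append: "exec_word C (a @ b) =
   (case exec_word C a of None \<Rightarrow> None | Some C'' \<Rightarrow> exec_word C'' b)"
proof (induction a arbitrary: C)
  case Nil then show ?case by simp
next
  case (Cons x a) then show ?case by (cases x) auto
qed

lemma exec_stuck: "exec_word C w = None \<Longrightarrow>
  \<exists>n i C'. n < length w \<and> w ! n = LP i \<and> exec_word C (take n w) = Some C' \<and> C' ! i"
proof (induction w arbitrary: C)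
  case Nil then show ?case by simp
next
  case (Cons a w)
  show ?case
  proof (cases a)
    case (LP j)
    show ?thesis
    proof (cases "C ! j")
      case True then show ?thesis using LP by (intro exI[of _ 0] exI[of _ j] exI[of _ C]) auto
    next
      case False
      then have "exec_word (C[j := True]) w = None" using Cons.prems LP by simp
      from Cons.IH[OF this] obtain n i C' where
        "n < length w" "w ! n = LP i" "exec_word (C[j := True]) (take n w) = Some C'" "C' ! i"
        by blast
      then show ?thesis using LP False by (intro exI[of _ "Suc n"] exI[of _ i] exI[of _ C']) auto
    qed
  next
    case (LT j)
    then have "exec_word (C[j := False]) w = None" using Cons.prems by simp
    from Cons.IH[OF this] obtain n i C' where
      "n < length w" "w ! n = LP i" "exec_word (C[j := False]) (take n w) = Some C'" "C' ! i"
      by blast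
    then show ?thesis using LT by (intro exI[of _ "Suc n"] exI[of _ i] exI[of _ C']) auto
  qed
qed

lemma exec_run: "exec_word C w = Some C' \<Longrightarrow>
  lred\<^sup>*\<^sup>* ({#(w @ u, e)#} + P, C) ({#(u, e)#} + P, C')"
proof (induction w arbitrary: C)
  case Nil then show ?case by simp
next
  case (Cons a w)
  show ?case
  proof (cases a)
    case (LP j)
    then have nj: "\<not> C ! j" and ex: "exec_word (C[j := True]) w = Some C'"
      using Cons.prems by (auto split: if_splits)
    have "lred ({#(LP j # (w @ u), e)#} + P, C) ({#(w @ u, e)#} + P, C[j := True])"
      by (rule lred_P[OF nj])
    then show ?thesis using Cons.IH[OF ex] LP
      by (simp add: converse_rtranclp_into_rtranclp)
  next
    case (LT j)
    then have ex: "exec_word (C[j := False]) w = Some C'" using Cons.prems by auto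
    have "lred ({#(LT j # (w @ u), e)#} + P, C) ({#(w @ u, e)#} + P, C[j := False])"
      by (rule lred_T)
    then show ?thesis using Cons.IH[OF ex] LT
      by (simp add: converse_rtranclp_into_rtranclp)
  qed
qed

lemma blocking:
  assumes "exec_word IS S = None" and "\<forall>a\<in>set S. lidx a < length IS"
  shows "\<exists>i<length IS. has_blocking_subseq IS S i"
proof -
  from exec_stuck[OF assms(1)] obtain n i C' where
    n: "n < length S" "S ! n = LP i" "exec_word IS (take n S) = Some C'" "C' ! i" by blast
  have il: "i < length IS" using assms(2) n(1,2) by (metis lidx.simps(1) nth_mem)
  have Sd: "S = take n S @ [LP i] @ drop (Suc n) S"
    using n(1,2) by (metis Cons_nth_drop_Suc append_Cons append_self_conv2 append_take_drop_id)
  have sb: "stuck_before IS S n i" using n unfolding stuck_before_def by blast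
  show ?thesis
  proof (cases "no_lock i (take n S)")
    case True
    then have "has_blocking_subseq IS S i"
      unfolding has_blocking_subseq_def using Sd sb n(1)
      by (intro disjI2 exI[of _ "take n S"] exI[of _ "drop (Suc n) S"]) auto
    then show ?thesis using il by blast
  next
    case False
    then have "\<exists>x\<in>set (take n S). lidx x = i" unfolding no_lock_def
      by (metis lidx.simps)
    then obtain B x R2 where A: "take n S = B @ x # R2" and xi: "lidx x = i"
      and R2: "\<forall>y\<in>set R2. lidx y \<noteq> i"
      using split_list_last_prop[of "take n S" "\<lambda>x. lidx x = i"] by blast
    have nl: "no_lock i R2" unfolding no_lock_def using R2
      by (metis lidx.simps)
    from n(3) A obtain C1 where C1: "exec_word IS B = Some C1"
      and rest: "exec_word C1 (x # R2) = Some C'"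
      by (auto simp: exec_append split: option.splits)
    have lC1: "length C1 = length IS" using exec_len[OF C1] .
    have "x = LP i"
    proof (cases x)
      case (LT j)
      with xi have "j = i" by simp
      with rest LT have "exec_word (C1[i := False]) R2 = Some C'" by simp
      from exec_nolock[OF this nl] have "C' ! i = False" using lC1 il by simp
      with n(4) show ?thesis by simp
    next
      case (LP j) with xi show ?thesis by simp
    qed
    have len: "n = length B + 1 + length R2" using A n(1)
      by (metis length_append length_Cons length_take min.absorb4 add.assoc plus_1_eq_Suc add.commute)
    have "S = B @ [LP i] @ R2 @ [LP i] @ drop (Suc n) S"
      using Sd A \<open>x = LP i\<close> by (metis append.assoc append_Cons append_Nil)
    then have "has_blocking_subseq IS S i"
      unfolding has_blocking_subseq_def using sb nl len
      by (intro disjI1 exI[of _ B] exI[of _ R2] exI[of _ "drop (Suc n) S"]) auto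
    then show ?thesis using il by blast
  qed
qed

lemma not_may_single: "\<not> s_may {#u#}" if "u \<noteq> SCheck"
proof -
  have "sred\<^sup>*\<^sup>* {#u#} Q \<Longrightarrow> Q = {#u#}" for Q
  proof (induction rule: rtranclp_induct)
    case base then show ?case by simp
  next
    case (step y z)
    from step.hyps(2) step.IH show ?case
      by (cases rule: sred.cases) (auto dest: arg_cong[of _ _ size])
  qed
  then show ?thesis using that unfolding s_may_def s_successful_def by fastforce
qed

lemma word_runs_impossible:
  assumes ct: "correct_translation k IS ws wr" and u: "u \<noteq> SCheck"
    and tr: "tr_sub ws wr u = (w, True)"
  shows "exec_word IS w = None"
proof (rule ccontr)
  assume "exec_word IS w \<noteq> None"
  then obtain C where "exec_word IS w = Some C" by blast
  from exec_run[OF this, of "[]" True "{#}"]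
  have "lred\<^sup>*\<^sup>* ({#(w, True)#}, IS) ({#([], True)#}, C)" by simp
  then have "l_may (tr_proc ws wr {#u#}, IS)"
    unfolding l_may_def l_successful_def tr_proc_def using tr by auto
  with ct have "s_may {#u#}" unfolding correct_translation_def by blast
  with not_may_single[OF u] show False by simp
qed

theorem lemma4p4:
  fixes k :: nat and IS :: "bool list" and ws wr :: "lact list"
  assumes "k \<ge> 2" and "length IS = k"
    and "correct_translation k IS ws wr"
  shows "(\<exists>i<k. has_blocking_subseq IS ws i) \<and> (\<exists>i<k. has_blocking_subseq IS wr i)"
proof -
  have b: "\<forall>a\<in>set ws \<union> set wr. lidx a < length IS"
    using assms(2,3) unfolding correct_translation_def by auto
  have "exec_word IS ws = None"
    using word_runs_impossible[OF assms(3), of "SSend SCheck" ws] by simp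
  moreover have "exec_word IS wr = None"
    using word_runs_impossible[OF assms(3), of "SRecv SCheck" wr] by simp
  ultimately show ?thesis using blocking b assms(2) by auto
qed

end
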